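(* Let $\alpha,\beta:\mathbb{R}[x]\to\mathbb{R}$ be the linear functionals defined by $\alpha(1)=0$, $\alpha(x)=1$, $\alpha(x^n)=0$ for $n\ge2$, and $\beta(1)=1$, $\beta(x)=0$, $\beta(x^n)=0$ for $n\ge2$. Let $P(x)=x(x+1)(x-1)$, $R(x)=x^2-\tfrac14$, and $T[f]=\alpha(f)P+\beta(f)R$. Then $T$ is a hyperbolicity preserver.
   Context: A linear operator $T:\mathbb{R}[x]\to\mathbb{R}[x]$ is a hyperbolicity preserver if $T[p]$ has only real zeros whenever $p\in\mathbb{R}[x]$ has only real zeros. *)

theory Defs
  imports "HOL-Computational_Algebra.Polynomial" Complex_Main
begin

text \<open>A real polynomial has only real zeros (is hyperbolic). By the standard
convention in the theory of hyperbolicity preservers, the zero polynomial is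
counted as hyperbolic.\<close>
definition only_real_zeros :: "real poly \<Rightarrow> bool" where
  "only_real_zeros p \<longleftrightarrow>
     p = 0 \<or> (\<forall>z::complex. poly (map_poly complex_of_real p) z = 0 \<longrightarrow> z \<in> \<real>)"

definition linear_poly_op :: "(real poly \<Rightarrow> real poly) \<Rightarrow> bool" where
  "linear_poly_op T \<longleftrightarrow>
     (\<forall>p q. T (p + q) = T p + T q) \<and> (\<forall>c p. T (smult c p) = smult c (T p))"

definition hyperbolicity_preserver :: "(real poly \<Rightarrow> real poly) \<Rightarrow> bool" where
  "hyperbolicity_preserver T \<longleftrightarrow>
     linear_poly_op T \<and> (\<forall>p. only_real_zeros p \<longrightarrow> only_real_zeros (T p))"

definition alpha :: "real poly \<Rightarrow> real" where "alpha f = coeff f 1"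
definition beta :: "real poly \<Rightarrow> real" where "beta f = coeff f 0"

end

theory Submission
  imports Defs
begin

lemma cubic_roots:
  fixes t :: real and p :: "real poly"
  assumes hp: "\<And>x. poly p x = x^3 - x + t*(x^2-1/4)"
  shows "\<exists>r1 r2 r3. r1 < r2 \<and> r2 < r3 \<and> poly p r1 = 0 \<and> poly p r2 = 0 \<and> poly p r3 = 0"
proof -
  obtain r2 where r2: "-1/2 < r2" "r2 < 1/2" "poly p r2 = 0"
    using poly_IVT_neg[of "-1/2" "1/2" p] by (auto simp: hp power2_eq_square power3_eq_cube)
  consider "t > 0" | "t < 0" | "t = 0" by linarith
  then show ?thesis
  proof cases
    case 1
    have a: "poly p (-(t+1)) < 0" unfolding hp using 1
      by (simp add: power2_eq_square power3_eq_cube algebra_simps)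
         (smt (verit) mult_pos_pos)
    obtain r1 where r1: "-(t+1) < r1" "r1 < -1" "poly p r1 = 0"
      using poly_IVT_pos[of "-(t+1)" "-1" p] a 1 by (auto simp: hp power2_eq_square power3_eq_cube)
    obtain r3 where r3: "1/2 < r3" "r3 < 1" "poly p r3 = 0"
      using poly_IVT_pos[of "1/2" "1" p] 1 by (auto simp: hp power2_eq_square power3_eq_cube)
    show ?thesis using r1 r2 r3 by (intro exI[of _ r1] exI[of _ r2] exI[of _ r3]) auto
  next
    case 2
    have a: "poly p (1-t) > 0" unfolding hp using 2
      by (simp add: power2_eq_square power3_eq_cube algebra_simps)
    obtain r1 where r1: "-1 < r1" "r1 < -1/2" "poly p r1 = 0"
      using poly_IVT_pos[of "-1" "-1/2" p] 2 by (auto simp: hp power2_eq_square power3_eq_cube)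
    obtain r3 where r3: "1 < r3" "r3 < 1-t" "poly p r3 = 0"
      using poly_IVT_pos[of "1" "1-t" p] a 2 by (auto simp: hp power2_eq_square power3_eq_cube)
    show ?thesis using r1 r2 r3 by (intro exI[of _ r1] exI[of _ r2] exI[of _ r3]) auto
  next
    case 3
    show ?thesis using 3
      by (intro exI[of _ "-1"] exI[of _ 0] exI[of _ 1]) (auto simp: hp)
  qed
qed

lemma poly_of_real_map: "poly (map_poly of_real p) (of_real x) = (of_real (poly p x) :: complex)"
  by (induction p) (auto simp: map_poly_pCons)

theorem mainTheorem2:
  fixes P R :: "real poly" and T :: "real poly \<Rightarrow> real poly"
  assumes "P = [:0, 1:] * [:1, 1:] * [:-1, 1:]"
    and "R = [:-1/4, 0, 1:]"
    and "\<And>f. T f = smult (alpha f) P + smult (beta f) R"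
  shows "hyperbolicity_preserver T"
proof -
  have Tf: "T f = [:-beta f/4, -alpha f, beta f, alpha f:]" for f
    by (simp add: assms)
  have lin: "linear_poly_op T"
    unfolding linear_poly_op_def
    by (simp add: Tf alpha_def beta_def algebra_simps, simp add: field_simps)
  have hyp: "only_real_zeros (T f)" for f
  proof -
    define a where "a = alpha f"
    define b where "b = beta f"
    have q: "T f = [:-b/4, -a, b, a:]" by (simp add: Tf a_def b_def)
    have pz: "poly (map_poly complex_of_real (T f)) z
        = of_real a * (z^3 - z) + of_real b * (z^2 - 1/4)" for z
      unfolding q by (simp add: map_poly_pCons algebra_simps power2_eq_square power3_eq_cube)
    show ?thesis
    proof (cases "a = 0")
      case True
      show ?thesis
      proof (cases "b = 0")
        case True
        then show ?thesis using \<open>a = 0\<close> by (simp add: only_real_zeros_def q)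
      next
        case False
        show ?thesis unfolding only_real_zeros_def
        proof (intro disjI2 allI impI)
          fix z :: complex
          assume "poly (map_poly complex_of_real (T f)) z = 0"
          hence "of_real b * (z^2 - 1/4) = 0" using pz \<open>a = 0\<close> by simp
          hence "z^2 - 1/4 = 0" using False by simp
          hence "(z - 1/2) * (z - (-1/2)) = 0" by (simp add: algebra_simps power2_eq_square)
          hence "z = 1/2 \<or> z = -1/2" by (simp only: mult_eq_0_iff right_minus_eq)
          moreover have "(1/2::complex) \<in> \<real>" "(-1/2::complex) \<in> \<real>" by simp_all
          ultimately show "z \<in> \<real>" by blast
        qed
      qed
    next
      case False
      define p' where "p' = smult (1/a) (T f)"
      have hp: "poly p' x = x^3 - x + (b/a)*(x^2-1/4)" for x
        using False unfolding p'_def q by (simp add: field_simps power2_eq_square power3_eq_cube)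
      obtain r1 r2 r3 where r: "r1 < r2" "r2 < r3" "poly p' r1 = 0" "poly p' r2 = 0" "poly p' r3 = 0"
        using cubic_roots[of p' "b/a", OF hp] by blast
      have rq: "poly (T f) r = 0" if "poly p' r = 0" for r
        using that False unfolding p'_def by simp
      let ?Q = "map_poly complex_of_real (T f)"
      have degQ: "degree ?Q = 3" using False unfolding q by (simp add: map_poly_pCons)
      hence Q0: "?Q \<noteq> 0" by auto
      show ?thesis unfolding only_real_zeros_def
      proof (intro disjI2 allI impI)
        fix z :: complex
        assume z: "poly ?Q z = 0"
        show "z \<in> \<real>"
        proof (rule ccontr)
          assume nz: "z \<notin> \<real>"
          let ?A = "{of_real r1, of_real r2, of_real r3, z} :: complex set"
          have sub: "?A \<subseteq> {x. poly ?Q x = 0}"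
            using z rq r by (auto simp: poly_of_real_map)
          have zn: "z \<noteq> of_real r1" "z \<noteq> of_real r2" "z \<noteq> of_real r3"
            using nz by auto
          have "card ?A = 4" using r zn by (simp add: of_real_eq_iff)
          moreover have "card ?A \<le> card {x. poly ?Q x = 0}"
            by (rule card_mono[OF poly_roots_finite[OF Q0] sub])
          moreover have "card {x. poly ?Q x = 0} \<le> 3"
            using card_poly_roots_bound[OF Q0] degQ by simp
          ultimately show False by simp
        qed
      qed
    qed
  qed
  show ?thesis unfolding hyperbolicity_preserver_def using lin hyp by blast
qed

end
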